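(* Every connected finite graph $G=(V,E)$ (parallel edges and self-loops allowed) has the weighted strict Gauss–Lucas property: for every $0<\beta<1$, every legal weight assignment $w$ for $G$, and every collection of complex activities $(z_v)_{v\in V}$ with $|z_v|\ge 1$ for all $v\in V$, we have $\mathcal{D}_G Z_w(G)\neq 0$. Consequently $G$ also has the strict Gauss–Lucas property: under the same conditions on $\beta$ and $(z_v)$, $\mathcal{D}_G Z_I(G,\beta,(z_v)_{v\in V})\ne 0$.
   Context: Graphs may have parallel edges and self-loops; the degree $\deg(v)$ counts edges with multiplicity, a self-loop counting twice, and $d(\sigma)$ counts (with multiplicity) the edges $\{u,v\}$ whose endpoints receive different spins ($\sigma(u)\neq\sigma(v)$). For $\sigma\in\{+,-\}^V$, $0<\beta\le1$ and complex activities $(z_v)_{v\in V}$, the multivariate Ising partition function is $Z_I(G,\beta,(z_v))=\sum_{\sigma\in\{+,-\}^V}\beta^{d(\sigma)}\prod_{v:\sigma(v)=+}z_v$. A weight assignment $w:V\to\mathbb{Z}_{>0}$ is legal if $w(v)\ge\deg(v)$ for all $v$. The weighted partition function is $Z_w(G)=\sum_{\sigma\in\{+,-\}^V}\beta^{d(\sigma)}\prod_{v:\sigma(v)=+}z_v^{w(v)}$, a polynomial in the variables $(z_v)$. The operator $\mathcal{D}_G=\sum_{v\in V}z_v\frac{\partial}{\partial z_v}$. $G$ has the strict Gauss–Lucas property (SGLP) if $\mathcal{D}_GZ_I(G,\beta,(z_v))\neq0$ whenever $0<\beta<1$ and $|z_v|\ge1$ for all $v$; it has the weighted strict Gauss–Lucas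 property (WSGLP) if $\mathcal{D}_GZ_w(G)\ne0$ for every legal $w$ under the same conditions. *)

theory Defs
  imports "HOL-Analysis.Analysis" "HOL-Library.FuncSet"
begin

text \<open>Parallel edges are distinct identifiers
  with the same endpoints; a self-loop is an edge e with fst (ends e) = snd (ends e).
  Spins: True = +, False = -.\<close>

definition multigraph :: "'a set \<Rightarrow> 'e set \<Rightarrow> ('e \<Rightarrow> 'a \<times> 'a) \<Rightarrow> bool" where
  "multigraph V E ends \<longleftrightarrow> finite V \<and> finite E \<and>
     (\<forall>e\<in>E. fst (ends e) \<in> V \<and> snd (ends e) \<in> V)"

definition adj :: "'e set \<Rightarrow> ('e \<Rightarrow> 'a \<times> 'a) \<Rightarrow> 'a \<Rightarrow> 'a \<Rightarrow> bool" where
  "adj E ends x y \<longleftrightarrow> (\<exists>e\<in>E. ends e = (x, y) \<or> ends e = (y, x))"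

definition connected_graph :: "'a set \<Rightarrow> 'e set \<Rightarrow> ('e \<Rightarrow> 'a \<times> 'a) \<Rightarrow> bool" where
  "connected_graph V E ends \<longleftrightarrow> V \<noteq> {} \<and>
     (\<forall>u\<in>V. \<forall>v\<in>V. (adj E ends)\<^sup>*\<^sup>* u v)"

text \<open>Degree with multiplicity; a self-loop counts twice.\<close>
definition deg :: "'e set \<Rightarrow> ('e \<Rightarrow> 'a \<times> 'a) \<Rightarrow> 'a \<Rightarrow> nat" where
  "deg E ends v = (\<Sum>e\<in>E. (if fst (ends e) = v then 1 else 0) + (if snd (ends e) = v then 1 else 0))"

definition dcut :: "'e set \<Rightarrow> ('e \<Rightarrow> 'a \<times> 'a) \<Rightarrow> ('a \<Rightarrow> bool) \<Rightarrow> nat" where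
  "dcut E ends \<sigma> = card {e\<in>E. \<sigma> (fst (ends e)) \<noteq> \<sigma> (snd (ends e))}"

definition spins :: "'a set \<Rightarrow> ('a \<Rightarrow> bool) set" where
  "spins V = V \<rightarrow>\<^sub>E (UNIV :: bool set)"

definition Z_I :: "'a set \<Rightarrow> 'e set \<Rightarrow> ('e \<Rightarrow> 'a \<times> 'a) \<Rightarrow> real \<Rightarrow> ('a \<Rightarrow> complex) \<Rightarrow> complex" where
  "Z_I V E ends \<beta> z = (\<Sum>\<sigma>\<in>spins V. complex_of_real (\<beta> ^ dcut E ends \<sigma>) *
       (\<Prod>v\<in>{v\<in>V. \<sigma> v}. z v))"

definition legal_weight :: "'a set \<Rightarrow> 'e set \<Rightarrow> ('e \<Rightarrow> 'a \<times> 'a) \<Rightarrow> ('a \<Rightarrow> nat) \<Rightarrow> bool" where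
  "legal_weight V E ends w \<longleftrightarrow> (\<forall>v\<in>V. w v > 0 \<and> w v \<ge> deg E ends v)"

definition Z_w :: "'a set \<Rightarrow> 'e set \<Rightarrow> ('e \<Rightarrow> 'a \<times> 'a) \<Rightarrow> real \<Rightarrow> ('a \<Rightarrow> nat) \<Rightarrow> ('a \<Rightarrow> complex) \<Rightarrow> complex" where
  "Z_w V E ends \<beta> w z = (\<Sum>\<sigma>\<in>spins V. complex_of_real (\<beta> ^ dcut E ends \<sigma>) *
       (\<Prod>v\<in>{v\<in>V. \<sigma> v}. z v ^ w v))"

text \<open>The operator D_G = sum_v z_v d/dz_v applied to a function F of the activities,
  evaluated at z (partial derivatives as complex derivatives in one variable).\<close>
definition DG :: "'a set \<Rightarrow> (('a \<Rightarrow> complex) \<Rightarrow> complex) \<Rightarrow> ('a \<Rightarrow> complex) \<Rightarrow> complex" where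
  "DG V F z = (\<Sum>v\<in>V. z v * deriv (\<lambda>t. F (z(v := t))) (z v))"

end

theory Submission
  imports Defs "HOL-Computational_Algebra.Fundamental_Theorem_Algebra"
begin

lemma cpar: "(cmod (a + b))^2 + (cmod (a - b))^2 = 2*(cmod a)^2 + 2*(cmod (b::complex))^2"
  unfolding cmod_power2 by (simp add: power2_eq_square algebra_simps)

lemma asano_ineq:
  fixes a b c d :: complex
  assumes H: "\<forall>x1 x2. cmod x1 < 1 \<longrightarrow> cmod x2 < 1 \<longrightarrow> a + b*x1 + c*x2 + d*x1*x2 \<noteq> 0"
    and x1: "cmod x1 < 1"
  shows "cmod (c + d*x1) \<le> cmod (a + b*x1)"
proof (rule ccontr)
  assume "\<not> ?thesis"
  hence lt: "cmod (a + b*x1) < cmod (c + d*x1)" by simp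
  hence nz: "c + d*x1 \<noteq> 0" by auto
  define x2 where "x2 = - (a + b*x1) / (c + d*x1)"
  have "cmod x2 = cmod (a + b*x1) / cmod (c + d*x1)"
    unfolding x2_def norm_divide norm_minus_cancel by simp
  hence "cmod x2 < 1" using lt nz by (simp add: divide_less_eq)
  moreover have "a + b*x1 + c*x2 + d*x1*x2 = 0"
    using nz by (simp add: x2_def field_simps)
  ultimately show False using H x1 by blast
qed

lemma asano1:
  fixes a b c d x :: complex
  assumes H: "\<forall>x1 x2. cmod x1 < 1 \<longrightarrow> cmod x2 < 1 \<longrightarrow> a + b*x1 + c*x2 + d*x1*x2 \<noteq> 0"
    and x: "cmod x < 1"
  shows "a + d*x \<noteq> 0"
proof -
  have H': "\<forall>x1 x2. cmod x1 < 1 \<longrightarrow> cmod x2 < 1 \<longrightarrow> a + c*x1 + b*x2 + d*x1*x2 \<noteq> 0"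
  proof (intro allI impI)
    fix x1 x2 :: complex assume "cmod x1 < 1" "cmod x2 < 1"
    hence "a + b*x2 + c*x1 + d*x2*x1 \<noteq> 0" using H by blast
    thus "a + c*x1 + b*x2 + d*x1*x2 \<noteq> 0" by (simp add: algebra_simps)
  qed
  have key: "cmod d * r \<le> cmod a" if r: "0 \<le> r" "r < 1" for r :: real
  proof -
    have n: "cmod (complex_of_real r) < 1" "cmod (- complex_of_real r) < 1" using r by auto
    have i1: "cmod (c + d*r) \<le> cmod (a + b*r)" "cmod (c + d*(-r)) \<le> cmod (a + b*(-r))"
      using asano_ineq[OF H n(1)] asano_ineq[OF H n(2)] by auto
    have i2: "cmod (b + d*r) \<le> cmod (a + c*r)" "cmod (b + d*(-r)) \<le> cmod (a + c*(-r))"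
      using asano_ineq[OF H' n(1)] asano_ineq[OF H' n(2)] by auto
    have sq: "\<And>u v. cmod u \<le> cmod v \<Longrightarrow> (cmod u)^2 \<le> (cmod v)^2"
      by (simp add: power_mono)
    have p1: "(cmod (c + d*r))^2 + (cmod (c + d*(-r)))^2 \<le> (cmod (a + b*r))^2 + (cmod (a + b*(-r)))^2"
      using sq[OF i1(1)] sq[OF i1(2)] by linarith
    have p2: "(cmod (b + d*r))^2 + (cmod (b + d*(-r)))^2 \<le> (cmod (a + c*r))^2 + (cmod (a + c*(-r)))^2"
      using sq[OF i2(1)] sq[OF i2(2)] by linarith
    have e: "\<And>u v :: complex. (cmod (u + v * r))^2 + (cmod (u + v * (-r)))^2 = 2*(cmod u)^2 + 2*(cmod v)^2 * r^2"
      using cpar by (simp add: norm_mult power_mult_distrib)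
    have "(cmod d)^2 * r^2 \<le> (cmod a)^2"
    proof -
      have "2*(cmod c)^2 + 2*(cmod d)^2*r^2 \<le> 2*(cmod a)^2 + 2*(cmod b)^2*r^2" using p1 by (simp only: e)
      moreover have "2*(cmod b)^2 + 2*(cmod d)^2*r^2 \<le> 2*(cmod a)^2 + 2*(cmod c)^2*r^2" using p2 by (simp only: e)
      moreover have "r^2 \<le> 1" using r by (simp add: power_le_one)
      hence "(cmod b)^2 * r^2 \<le> (cmod b)^2" "(cmod c)^2 * r^2 \<le> (cmod c)^2"
        by (simp_all add: mult_left_le)
      ultimately show ?thesis by linarith
    qed
    hence "(cmod d * r)^2 \<le> (cmod a)^2" by (simp add: power_mult_distrib)
    thus ?thesis using r by (meson norm_ge_zero power2_le_imp_le)
  qed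
  show ?thesis
  proof (cases "d = 0")
    case True
    have "a \<noteq> 0" using H[rule_format, of 0 0] by simp
    thus ?thesis using True by simp
  next
    case False
    define r where "r = (1 + cmod x)/2"
    have r: "0 \<le> r" "r < 1" "cmod x < r" using x by (auto simp: r_def)
    have "cmod d * cmod x < cmod d * r" using False r by simp
    also have "\<dots> \<le> cmod a" using key r by auto
    finally have "cmod (d*x) < cmod a" by (simp add: norm_mult)
    thus ?thesis by (metis add_eq_0_iff norm_minus_cancel order_less_irrefl)
  qed
qed

lemma asano:
  fixes a b c d x :: complex and r1 r2 :: real
  assumes r: "r1 > 0" "r2 > 0"
    and H: "\<forall>x1 x2. cmod x1 < r1 \<longrightarrow> cmod x2 < r2 \<longrightarrow> a + b*x1 + c*x2 + d*x1*x2 \<noteq> 0"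
    and x: "cmod x < r1 * r2"
  shows "a + d*x \<noteq> 0"
proof -
  have "\<forall>x1 x2. cmod x1 < 1 \<longrightarrow> cmod x2 < 1 \<longrightarrow>
      a + (b*r1)*x1 + (c*r2)*x2 + (d*r1*r2)*x1*x2 \<noteq> 0"
  proof (intro allI impI)
    fix x1 x2 :: complex assume "cmod x1 < 1" "cmod x2 < 1"
    hence "cmod (r1*x1) < r1" "cmod (r2*x2) < r2" using r by (auto simp: norm_mult)
    hence "a + b*(r1*x1) + c*(r2*x2) + d*(r1*x1)*(r2*x2) \<noteq> 0" using H by blast
    thus "a + (b*r1)*x1 + (c*r2)*x2 + (d*r1*r2)*x1*x2 \<noteq> 0" by (simp add: algebra_simps)
  qed
  moreover have "cmod (x / (r1*r2)) < 1" using x r by (simp add: norm_divide norm_mult divide_less_eq)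
  ultimately have "a + (d*r1*r2) * (x/(r1*r2)) \<noteq> 0" by (rule asano1)
  thus ?thesis using r by simp
qed

lemma edge_sq_ineq:
  fixes bt s m x :: real
  assumes b: "0 < bt" "bt < 1" and s: "s \<le> 1" and m: "0 \<le> m" "m < s" and x: "x \<le> m"
  shows "(1+bt* s)^2 * (bt^2 + 2*bt*x + m^2) \<le> (bt+s)^2 * (1 + 2*bt*x + bt^2*m^2)"
proof -
  have c: "0 \<le> (1+bt* s)^2 - (bt+s)^2"
  proof -
    have "(1+bt* s)^2 - (bt+s)^2 = (1 - bt^2)*(1 - s^2)" by (simp add: power2_eq_square algebra_simps)
    moreover have "0 \<le> 1 - bt^2" using b by (simp add: power_le_one)
    moreover have "0 \<le> 1 - s^2" using s m by (simp add: power_le_one)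
    ultimately show ?thesis by simp
  qed
  have "(1+bt* s)^2 * (bt^2 + 2*bt*x + m^2) - (bt+s)^2 * (1 + 2*bt*x + bt^2*m^2)
      = 2*bt*x*((1+bt* s)^2 - (bt+s)^2) + ((1+bt* s)^2*(bt^2+m^2) - (bt+s)^2*(1+bt^2*m^2))"
    by (simp add: algebra_simps)
  also have "\<dots> \<le> 2*bt*m*((1+bt* s)^2 - (bt+s)^2) + ((1+bt* s)^2*(bt^2+m^2) - (bt+s)^2*(1+bt^2*m^2))"
    using c x b by (simp add: mult_right_mono)
  also have "\<dots> = ((1+bt* s)*(bt+m) - (bt+s)*(1+bt*m)) * ((1+bt* s)*(bt+m) + (bt+s)*(1+bt*m))"
    by (simp add: power2_eq_square algebra_simps)
  also have "\<dots> \<le> 0"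
  proof -
    have "(1+bt* s)*(bt+m) - (bt+s)*(1+bt*m) = (m - s)*(1 - bt^2)" by (simp add: power2_eq_square algebra_simps)
    moreover have "(m - s)*(1 - bt^2) \<le> 0" using m b by (simp add: mult_nonpos_nonneg power_le_one)
    moreover have "0 \<le> (1+bt* s)*(bt+m) + (bt+s)*(1+bt*m)" using b m by simp
    ultimately show ?thesis by (simp add: mult_nonpos_nonneg)
  qed
  finally show ?thesis by simp
qed

lemma edge_nz:
  fixes a b :: complex and bt s :: real
  assumes bt: "0 < bt" "bt < 1" and s: "s \<le> 1" and a: "cmod a < s"
    and b: "cmod b * (bt + s) < 1 + bt* s"
  shows "1 + bt*a + bt*b + a*b \<noteq> 0"
proof
  assume E: "1 + bt*a + bt*b + a*b = 0"
  show False
  proof (cases "bt + a = 0")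
    case True
    hence "a = - bt" by (simp add: add_eq_0_iff)
    with E have "complex_of_real bt * complex_of_real bt = 1" by (simp add: algebra_simps)
    hence "complex_of_real (bt*bt) = 1" by simp
    hence "bt*bt = 1" by (metis of_real_eq_1_iff)
    moreover have "bt*bt < 1 * 1" using bt by (intro mult_strict_mono) auto
    ultimately show False by simp
  next
    case False
    have "b*(bt+a) + (1+bt*a) = 0" using E by (simp add: algebra_simps)
    hence eq: "b * (bt + a) = - (1 + bt*a)" by (simp only: eq_neg_iff_add_eq_0)
    hence n: "cmod b * cmod (bt + a) = cmod (1 + bt*a)" by (metis norm_minus_cancel norm_mult)
    define m where "m = cmod a"
    define x where "x = Re a"
    have m: "0 \<le> m" "m < s" using a by (auto simp: m_def)
    have x: "x \<le> m" by (simp add: x_def m_def complex_Re_le_cmod)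
    have n1: "(cmod (1 + bt*a))^2 = 1 + 2*bt*x + bt^2*m^2"
      unfolding m_def x_def cmod_power2 by (simp add: power2_eq_square algebra_simps)
    have n2: "(cmod (bt + a))^2 = bt^2 + 2*bt*x + m^2"
      unfolding m_def x_def cmod_power2 by (simp add: power2_eq_square algebra_simps)
    have "((1+bt* s) * cmod (bt + a))^2 \<le> ((bt+s) * cmod (1 + bt*a))^2"
      unfolding power_mult_distrib n1 n2 using edge_sq_ineq[OF bt s m x] by simp
    hence k: "(1+bt* s) * cmod (bt + a) \<le> (bt+s) * cmod (1 + bt*a)"
      using bt m by (meson norm_ge_zero power2_le_imp_le zero_le_mult_iff add_nonneg_nonneg less_imp_le order_trans)
    have pos: "0 < cmod (bt + a)" using False by simp
    have "cmod b * (bt + s) * cmod (bt + a) < (1 + bt* s) * cmod (bt + a)"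
      using b pos by (simp add: mult_strict_right_mono)
    also have "\<dots> \<le> (bt+s) * cmod (1 + bt*a)" by (rule k)
    also have "\<dots> = cmod b * (bt + s) * cmod (bt + a)" using n by (simp add: algebra_simps)
    finally show False by simp
  qed
qed

lemma edge_step:
  fixes A B C D a0 b0 :: complex and bt :: real
  assumes bt: "0 < bt" "bt < 1"
    and P: "\<forall>a b. cmod a < 1 \<longrightarrow> cmod b < 1 \<longrightarrow> A + B*a + C*b + D*a*b \<noteq> 0"
    and a0: "cmod a0 < 1" and b0: "cmod b0 \<le> 1"
  shows "A + bt*B*a0 + bt*C*b0 + D*a0*b0 \<noteq> 0"
proof -
  define s where "s = (1 + cmod a0)/2"
  have n0: "0 \<le> cmod a0" by simp
  have s1: "cmod a0 < s" using a0 n0 unfolding s_def by (simp add: field_simps)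
  have s2: "s < 1" using a0 n0 unfolding s_def by (simp add: field_simps)
  have s3: "0 < s" using s1 n0 by linarith
  note s = s1 s2 s3
  define T where "T = (1 + bt* s)/(bt + s)"
  have "0 < (1 - bt)*(1 - s)" using bt s by simp
  hence "bt + s < 1 + bt * s" by (simp add: algebra_simps)
  hence T1: "1 < T" using bt s by (simp add: T_def)
  have step1: "(A + C*b1)*(1 + bt*b2) + ((B + D*b1)*(bt + b2)) * a \<noteq> 0"
    if b1: "cmod b1 < 1" and b2: "cmod b2 < T" and a: "cmod a < 1 * s" for b1 b2 a :: complex
  proof -
    have "\<forall>x1 x2. cmod x1 < 1 \<longrightarrow> cmod x2 < s \<longrightarrow>
      (A + C*b1)*(1 + bt*b2) + ((B + D*b1)*(1 + bt*b2))*x1 + ((A + C*b1)*(bt + b2))*x2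
        + ((B + D*b1)*(bt + b2))*x1*x2 \<noteq> 0"
    proof (intro allI impI)
      fix x1 x2 :: complex assume x1: "cmod x1 < 1" and x2: "cmod x2 < s"
      have "A + B*x1 + C*b1 + D*x1*b1 \<noteq> 0" using P x1 b1 by blast
      moreover have "1 + bt*x2 + bt*b2 + x2*b2 \<noteq> 0"
      proof (rule edge_nz[OF bt _ x2])
        show "s \<le> 1" using s by simp
        have "bt + s > 0" using s bt by simp
        thus "cmod b2 * (bt + s) < 1 + bt * s" using b2 by (simp add: T_def pos_less_divide_eq)
      qed
      ultimately have "(A + B*x1 + C*b1 + D*x1*b1) * (1 + bt*x2 + bt*b2 + x2*b2) \<noteq> 0" by simp
      thus "(A + C*b1)*(1 + bt*b2) + ((B + D*b1)*(1 + bt*b2))*x1 + ((A + C*b1)*(bt + b2))*x2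
        + ((B + D*b1)*(bt + b2))*x1*x2 \<noteq> 0" by (simp add: algebra_simps)
    qed
    from asano[OF _ _ this a] s show ?thesis by simp
  qed
  have "\<forall>x1 x2. cmod x1 < 1 \<longrightarrow> cmod x2 < T \<longrightarrow>
      (A + bt*B*a0) + (C + bt*D*a0)*x1 + (bt*A + B*a0)*x2 + (bt*C + D*a0)*x1*x2 \<noteq> 0"
  proof (intro allI impI)
    fix x1 x2 :: complex assume "cmod x1 < 1" "cmod x2 < T"
    from step1[OF this] s have "(A + C*x1)*(1 + bt*x2) + ((B + D*x1)*(bt + x2)) * a0 \<noteq> 0" by simp
    thus "(A + bt*B*a0) + (C + bt*D*a0)*x1 + (bt*A + B*a0)*x2 + (bt*C + D*a0)*x1*x2 \<noteq> 0"
      by (simp add: algebra_simps)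
  qed
  moreover have "cmod b0 < 1 * T" using b0 T1 by simp
  ultimately have "(A + bt*B*a0) + (bt*C + D*a0)*b0 \<noteq> 0" using T1 by (intro asano) auto
  thus ?thesis by (simp add: algebra_simps)
qed

lemma re_inv_pos:
  fixes r :: complex
  assumes "cmod r \<le> 1" "r \<noteq> 1"
  shows "0 < Re (1 / (1 - r))"
proof -
  have "Re r < 1"
  proof (rule ccontr)
    assume "\<not> Re r < 1"
    hence r1: "1 \<le> Re r" by simp
    have "Re r \<le> cmod r" by (rule complex_Re_le_cmod)
    hence "Re r = 1" using r1 assms(1) by linarith
    moreover have "(cmod r)^2 = (Re r)^2 + (Im r)^2" by (rule cmod_power2)
    moreover have "(cmod r)^2 \<le> 1" using assms(1) by (simp add: power_le_one)
    ultimately have "(Im r)^2 \<le> 0" by simp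
    hence "Im r = 0" by simp
    with \<open>Re r = 1\<close> have "r = 1" by (simp add: complex_eq_iff)
    with assms(2) show False by simp
  qed
  hence "0 < Re (1 - r)" by simp
  moreover have "1 - r \<noteq> 0" using assms(2) by simp
  ultimately show ?thesis by (simp add: Re_divide' )
qed

lemma root_re:
  fixes p :: "complex poly"
  assumes "degree p = n" "\<forall>t. poly p t = 0 \<longrightarrow> cmod t \<le> 1" "poly p 1 \<noteq> 0"
  shows "0 \<le> Re (poly (pderiv p) 1 / poly p 1) \<and> (0 < n \<longrightarrow> 0 < Re (poly (pderiv p) 1 / poly p 1))"
  using assms
proof (induction n arbitrary: p)
  case 0
  hence "pderiv p = 0" by (simp add: pderiv_eq_0_iff)
  thus ?case by simp
next
  case (Suc n)
  hence "\<not> constant (poly p)" by (simp add: constant_degree)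
  then obtain r where r: "poly p r = 0" using fundamental_theorem_of_algebra by blast
  hence "[:-r, 1:] dvd p" by (simp add: poly_eq_0_iff_dvd)
  then obtain q where pq: "p = [:-r, 1:] * q" by (elim dvdE)
  have q0: "q \<noteq> 0" using pq Suc.prems(3) by auto
  have "degree ([:-r,1:] * q) = degree [:-r,1:] + degree q" by (rule degree_mult_eq) (use q0 in auto)
  hence dq: "degree q = n" using Suc.prems(1) pq by simp
  have polyp: "\<And>t. poly p t = (t - r) * poly q t" unfolding pq by (simp add: algebra_simps)
  have q1: "poly q 1 \<noteq> 0" and r1: "r \<noteq> 1" using Suc.prems(3) polyp[of 1] by auto
  have qroots: "\<forall>t. poly q t = 0 \<longrightarrow> cmod t \<le> 1" using Suc.prems(2) polyp by auto
  have IH: "0 \<le> Re (poly (pderiv q) 1 / poly q 1)" using Suc.IH[OF dq qroots q1] by simp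
  have rr: "cmod r \<le> 1" using Suc.prems(2) r by auto
  have dp: "poly (pderiv p) 1 = (1 - r) * poly (pderiv q) 1 + poly q 1"
  proof -
    have "pderiv p = [:-r,1:] * pderiv q + q * pderiv [:-r,1:]" unfolding pq by (rule pderiv_mult)
    hence "poly (pderiv p) 1 = poly ([:-r,1:] * pderiv q + q * pderiv [:-r,1:]) 1" by (simp only:)
    also have "\<dots> = (1 - r) * poly (pderiv q) 1 + poly q 1" by (simp add: pderiv_pCons algebra_simps)
    finally show ?thesis .
  qed
  have "poly (pderiv p) 1 / poly p 1 = poly (pderiv q) 1 / poly q 1 + 1 / (1 - r)"
    using q1 r1 by (simp add: dp polyp field_simps)
  hence "Re (poly (pderiv p) 1 / poly p 1) = Re (poly (pderiv q) 1 / poly q 1) + Re (1 / (1 - r))"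
    by simp
  moreover have "0 < Re (1 / (1 - r))" using re_inv_pos[OF rr r1] .
  ultimately show ?case using IH by simp
qed

lemma pair_pos:
  fixes gu gv K :: complex
  assumes gu: "gu \<noteq> 0" and gv: "gv \<noteq> 0"
    and H: "\<forall>s r. 1 < cmod (1+s) \<longrightarrow> 1 < cmod (1+r) \<longrightarrow> gu* s + gv*r + K* s*r \<noteq> 0"
  shows "\<exists>l>0. gu = of_real l * gv"
proof -
  define k where "k = - gu / gv"
  have k0: "k \<noteq> 0" using gu gv by (simp add: k_def)
  have main: "Im k = 0 \<and> Re k < 0"
  proof (rule ccontr)
    assume nk: "\<not> (Im k = 0 \<and> Re k < 0)"
    have pos: "0 < cmod k + Re k"
    proof (rule ccontr)
      assume "\<not> 0 < cmod k + Re k"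
      hence le: "cmod k \<le> - Re k" by simp
      hence "(cmod k)^2 \<le> (Re k)^2"
        by (metis abs_le_square_iff abs_of_nonneg norm_ge_zero order.trans abs_ge_minus_self)
      hence "(Im k)^2 \<le> 0" by (simp add: cmod_power2)
      hence i0: "Im k = 0" by simp
      hence "Re k \<noteq> 0" using k0 by (simp add: complex_eq_iff)
      moreover have "Re k \<le> 0" using le norm_ge_zero[of k] by linarith
      ultimately show False using nk i0 by simp
    qed
    define e where "e = complex_of_real (cmod k) + cnj k"
    have Ree: "0 < Re e" using pos by (simp add: e_def)
    have "k * e = complex_of_real (cmod k) * k + complex_of_real ((cmod k)^2)"
    proof -
      have "k * cnj k = (complex_of_real (cmod k))^2" by (metis complex_norm_square of_real_power)
      thus ?thesis by (simp add: e_def distrib_left mult.commute)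
    qed
    hence Reke: "Re (k * e) = cmod k * (cmod k + Re k)"
      by (simp add: power2_eq_square algebra_simps)
    have Reke_pos: "0 < Re (k * e)" unfolding Reke using pos k0 by simp
    define c where "c = K / gv"
    define f where "f = (\<lambda>x::real. k * e / (1 + c * of_real x * e))"
    have "(f \<longlongrightarrow> k * e / (1 + c * of_real 0 * e)) (at_right 0)"
      unfolding f_def by (intro tendsto_intros) auto
    hence lim: "(f \<longlongrightarrow> k * e) (at_right 0)" by simp
    have "((\<lambda>x. Re (f x)) \<longlongrightarrow> Re (k * e)) (at_right 0)" using lim by (rule tendsto_Re)
    hence ev1: "eventually (\<lambda>x. 0 < Re (f x)) (at_right 0)"
      using Reke_pos by (rule order_tendstoD(1))
    have "((\<lambda>x::real. 1 + c * of_real x * e) \<longlongrightarrow> 1 + c * of_real 0 * e) (at_right 0)"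
      by (intro tendsto_intros)
    hence "((\<lambda>x::real. 1 + c * of_real x * e) \<longlongrightarrow> 1) (at_right 0)" by simp
    hence ev2: "eventually (\<lambda>x::real. 1 + c * of_real x * e \<noteq> 0) (at_right 0)"
      by (rule tendsto_imp_eventually_ne) simp
    have ev3: "eventually (\<lambda>x::real. 0 < x) (at_right 0)" by (simp add: eventually_at_right_less)
    have "eventually (\<lambda>x. 0 < Re (f x) \<and> 1 + c * of_real x * e \<noteq> 0 \<and> 0 < x) (at_right (0::real))"
      using ev1 ev2 ev3 by eventually_elim auto
    then obtain x :: real where x: "0 < Re (f x)" "1 + c * of_real x * e \<noteq> 0" "0 < x"
      using eventually_happens' trivial_limit_at_right_real by blast
    define s where "s = of_real x * e"
    define r where "r = k * s / (1 + c * s)"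
    have d: "1 + c * s \<noteq> 0" using x(2) by (simp add: s_def mult.assoc)
    have rf: "r = of_real x * f x" by (simp add: r_def f_def s_def mult.assoc mult.left_commute)
    have "1 < cmod (1 + s)"
    proof -
      have "Re (1 + s) = 1 + x * Re e" by (simp add: s_def)
      moreover have "0 < x * Re e" using x(3) Ree by simp
      ultimately show ?thesis using complex_Re_le_cmod[of "1+s"] by linarith
    qed
    moreover have "1 < cmod (1 + r)"
    proof -
      have "Re (1 + r) = 1 + x * Re (f x)" by (simp add: rf)
      moreover have "0 < x * Re (f x)" using x by simp
      ultimately show ?thesis using complex_Re_le_cmod[of "1+r"] by linarith
    qed
    moreover have "gu* s + gv*r + K* s*r = 0"
    proof -
      have K: "K = c * gv" using gv by (simp add: c_def)
      have g: "gu = - k * gv" using gv by (simp add: k_def)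
      have "gv * r * (1 + c* s) = gv * k * s" using d by (simp add: r_def)
      hence "gv * r + K * s * r = gv * k * s" by (simp add: K algebra_simps)
      thus ?thesis by (simp add: g algebra_simps)
    qed
    ultimately show False using H by blast
  qed
  show ?thesis
  proof (intro exI conjI)
    show "0 < - Re k" using main by simp
    have "k = complex_of_real (Re k)" using main by (simp add: complex_eq_iff)
    moreover have "gu = - k * gv" using gv by (simp add: k_def)
    ultimately show "gu = complex_of_real (- Re k) * gv" by simp
  qed
qed

lemma sum_split: "finite A \<Longrightarrow> sum f A = sum f {x\<in>A. P x} + sum f {x\<in>A. \<not> P x}"
proof -
  assume "finite A"
  have "A = {x\<in>A. P x} \<union> {x\<in>A. \<not> P x}" by auto
  hence "sum f A = sum f ({x\<in>A. P x} \<union> {x\<in>A. \<not> P x})" by simp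
  also have "\<dots> = sum f {x\<in>A. P x} + sum f {x\<in>A. \<not> P x}"
    using \<open>finite A\<close> by (intro sum.union_disjoint) auto
  finally show ?thesis .
qed

lemma prod_upd:
  assumes "finite S"
  shows "(\<Prod>u\<in>S. (y(a:=x)) u) = (if a \<in> S then x else 1) * (\<Prod>u\<in>S. (y(a:=1)) u)"
proof (cases "a \<in> S")
  case True
  have 1: "(\<Prod>u\<in>S. (y(a:=x)) u) = (y(a:=x)) a * (\<Prod>u\<in>S-{a}. (y(a:=x)) u)"
    by (rule prod.remove[OF assms True])
  have 2: "(\<Prod>u\<in>S. (y(a:=1)) u) = (y(a:=1)) a * (\<Prod>u\<in>S-{a}. (y(a:=1)) u)"
    by (rule prod.remove[OF assms True])
  have 3: "(\<Prod>u\<in>S-{a}. (y(a:=x)) u) = (\<Prod>u\<in>S-{a}. (y(a:=1)) u)"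
    by (rule prod.cong) auto
  show ?thesis using True by (simp only: 1 2 3 fun_upd_same if_True mult_1_left)
next
  case False
  have "(\<Prod>u\<in>S. (y(a:=x)) u) = (\<Prod>u\<in>S. (y(a:=1)) u)" using False by (intro prod.cong) auto
  thus ?thesis using False by (simp only: if_False mult_1_left)
qed

lemma finite_spins: "finite V \<Longrightarrow> finite (spins V)"
  unfolding spins_def by (intro finite_PiE) auto

definition Fpq :: "'a set \<Rightarrow> 'e set \<Rightarrow> ('e \<Rightarrow> 'a \<times> 'a) \<Rightarrow> real \<Rightarrow> 'a \<Rightarrow> 'a \<Rightarrow> bool \<Rightarrow> bool
    \<Rightarrow> ('a \<Rightarrow> complex) \<Rightarrow> complex" where
  "Fpq V E ends bt a b p q y = (\<Sum>\<sigma>\<in>{\<sigma>\<in>spins V. \<sigma> a = p \<and> \<sigma> b = q}.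
      complex_of_real (bt ^ dcut E ends \<sigma>) * (\<Prod>v\<in>{v\<in>V. \<sigma> v}. y v))"

lemma split4:
  assumes "finite A"
  shows "sum g A = sum g {\<sigma>\<in>A. \<sigma> a = True \<and> \<sigma> b = True} + sum g {\<sigma>\<in>A. \<sigma> a = True \<and> \<sigma> b = False}
     + sum g {\<sigma>\<in>A. \<sigma> a = False \<and> \<sigma> b = True} + sum g {\<sigma>\<in>A. \<sigma> a = False \<and> \<sigma> b = False}"
proof -
  have f1: "finite {\<sigma>\<in>A. \<sigma> a}" "finite {\<sigma>\<in>A. \<not> \<sigma> a}" using assms by auto
  have "sum g A = sum g {\<sigma>\<in>A. \<sigma> a} + sum g {\<sigma>\<in>A. \<not> \<sigma> a}" using sum_split[OF assms] .
  also have "sum g {\<sigma>\<in>A. \<sigma> a} = sum g {\<sigma>\<in>{\<sigma>\<in>A. \<sigma> a}. \<sigma> b} + sum g {\<sigma>\<in>{\<sigma>\<in>A. \<sigma> a}. \<not> \<sigma> b}"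
    using sum_split[OF f1(1)] .
  also have "sum g {\<sigma>\<in>A. \<not> \<sigma> a} = sum g {\<sigma>\<in>{\<sigma>\<in>A. \<not> \<sigma> a}. \<sigma> b} + sum g {\<sigma>\<in>{\<sigma>\<in>A. \<not> \<sigma> a}. \<not> \<sigma> b}"
    using sum_split[OF f1(2)] .
  also have "{\<sigma>\<in>{\<sigma>\<in>A. \<sigma> a}. \<sigma> b} = {\<sigma>\<in>A. \<sigma> a = True \<and> \<sigma> b = True}" by auto
  also have "{\<sigma>\<in>{\<sigma>\<in>A. \<sigma> a}. \<not> \<sigma> b} = {\<sigma>\<in>A. \<sigma> a = True \<and> \<sigma> b = False}" by auto
  also have "{\<sigma>\<in>{\<sigma>\<in>A. \<not> \<sigma> a}. \<sigma> b} = {\<sigma>\<in>A. \<sigma> a = False \<and> \<sigma> b = True}" by auto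
  also have "{\<sigma>\<in>{\<sigma>\<in>A. \<not> \<sigma> a}. \<not> \<sigma> b} = {\<sigma>\<in>A. \<sigma> a = False \<and> \<sigma> b = False}" by auto
  finally show ?thesis by (simp add: add.assoc)
qed

lemma Z_split:
  assumes "finite V"
  shows "Z_I V E ends bt y = Fpq V E ends bt a b True True y + Fpq V E ends bt a b True False y
     + Fpq V E ends bt a b False True y + Fpq V E ends bt a b False False y"
  unfolding Z_I_def Fpq_def by (rule split4[OF finite_spins[OF assms]])

lemma Fpq_scale:
  assumes V: "finite V" "a \<in> V" "b \<in> V" "a \<noteq> b"
  shows "Fpq V E ends bt a b p q (y(a:=a', b:=b')) =
     (if p then a' else 1) * (if q then b' else 1) * Fpq V E ends bt a b p q (y(a:=1, b:=1))"
proof -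
  have "(\<Prod>v\<in>{v\<in>V. \<sigma> v}. (y(a:=a', b:=b')) v) =
     (if p then a' else 1) * (if q then b' else 1) * (\<Prod>v\<in>{v\<in>V. \<sigma> v}. (y(a:=1, b:=1)) v)"
    if s: "\<sigma> a = p" "\<sigma> b = q" for \<sigma>
  proof -
    let ?S = "{v\<in>V. \<sigma> v}"
    have fS: "finite ?S" using V by simp
    have e1: "(\<Prod>v\<in>?S. (y(a:=a', b:=b')) v) = (if b \<in> ?S then b' else 1) * (\<Prod>v\<in>?S. (y(a:=a', b:=1)) v)"
      by (rule prod_upd[OF fS])
    have t1: "y(a:=a', b:=1) = y(b:=1, a:=a')" using V(4) by (rule fun_upd_twist)
    have e2: "(\<Prod>v\<in>?S. (y(b:=1, a:=a')) v) = (if a \<in> ?S then a' else 1) * (\<Prod>v\<in>?S. (y(b:=1, a:=1)) v)"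
      by (rule prod_upd[OF fS])
    have t2: "y(b:=1, a:=1) = y(a:=1, b:=1)" using V(4) by (rule fun_upd_twist[symmetric])
    have X: "(\<Prod>v\<in>?S. (y(a:=a', b:=b')) v) = (if b \<in> ?S then b' else 1) *
       ((if a \<in> ?S then a' else 1) * (\<Prod>v\<in>?S. (y(a:=1, b:=1)) v))"
      by (simp only: e1 t1 e2 t2)
    have i: "b \<in> ?S \<longleftrightarrow> q" "a \<in> ?S \<longleftrightarrow> p" using s V by auto
    show ?thesis unfolding X i by (simp only: mult_ac)
  qed
  note inner = this
  show ?thesis unfolding Fpq_def sum_distrib_left
  proof (rule sum.cong[OF refl])
    fix \<sigma> assume "\<sigma> \<in> {\<sigma> \<in> spins V. \<sigma> a = p \<and> \<sigma> b = q}"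
    hence s: "\<sigma> a = p" "\<sigma> b = q" by auto
    show "complex_of_real (bt ^ dcut E ends \<sigma>) * (\<Prod>v\<in>{v \<in> V. \<sigma> v}. (y(a := a', b := b')) v) =
      (if p then a' else 1) * (if q then b' else 1) *
      (complex_of_real (bt ^ dcut E ends \<sigma>) * (\<Prod>v\<in>{v \<in> V. \<sigma> v}. (y(a := 1, b := 1)) v))"
    proof -
      have h: "(\<Prod>v\<in>{v \<in> V. \<sigma> v}. (y(a := a', b := b')) v) = (if p then a' else 1) * (if q then b' else 1) * (\<Prod>v\<in>{v \<in> V. \<sigma> v}. (y(a := 1, b := 1)) v)"
        by (rule inner[OF s])
      show ?thesis by (simp only: h mult.left_commute)
    qed
  qed
qed

lemma Z_biaff:
  assumes V: "finite V" "a \<in> V" "b \<in> V" "a \<noteq> b"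
  shows "Z_I V E ends bt (y(a:=a', b:=b')) =
     Fpq V E ends bt a b False False (y(a:=1, b:=1)) + Fpq V E ends bt a b True False (y(a:=1, b:=1)) * a'
     + Fpq V E ends bt a b False True (y(a:=1, b:=1)) * b' + Fpq V E ends bt a b True True (y(a:=1, b:=1)) * a' * b'"
  unfolding Z_split[OF V(1), of E ends bt "y(a:=a', b:=b')" a b] Fpq_scale[OF V, where y=y and a'=a' and b'=b']
  by (simp only: if_True if_False mult_1_left mult_1_right) (simp only: ac_simps)

lemma dcut_remove:
  assumes "finite E" "e \<in> E" "ends e = (a,b) \<or> ends e = (b,a)"
  shows "dcut E ends \<sigma> = dcut (E - {e}) ends \<sigma> + (if \<sigma> a \<noteq> \<sigma> b then 1 else 0)"
proof -
  let ?P = "\<lambda>x. \<sigma> (fst (ends x)) \<noteq> \<sigma> (snd (ends x))"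
  have Pe: "?P e \<longleftrightarrow> \<sigma> a \<noteq> \<sigma> b" using assms(3) by auto
  have fin: "finite {x\<in>E - {e}. ?P x}" using assms(1) by simp
  show ?thesis
  proof (cases "?P e")
    case True
    have "{x\<in>E. ?P x} = insert e {x\<in>E - {e}. ?P x}" using True assms(2) by auto
    hence "card {x\<in>E. ?P x} = Suc (card {x\<in>E - {e}. ?P x})" using fin by simp
    thus ?thesis using True Pe by (simp add: dcut_def)
  next
    case False
    have "{x\<in>E. ?P x} = {x\<in>E - {e}. ?P x}" using False by auto
    thus ?thesis using False Pe by (simp add: dcut_def)
  qed
qed

lemma Fpq_edge:
  assumes "finite E" "e \<in> E" "ends e = (a,b) \<or> ends e = (b,a)"
  shows "Fpq V E ends bt a b p q y = (if p \<noteq> q then complex_of_real bt else 1) * Fpq V (E - {e}) ends bt a b p q y"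
  unfolding Fpq_def sum_distrib_left
proof (rule sum.cong[OF refl])
  fix \<sigma> assume "\<sigma> \<in> {\<sigma> \<in> spins V. \<sigma> a = p \<and> \<sigma> b = q}"
  hence s: "\<sigma> a = p" "\<sigma> b = q" by auto
  have "bt ^ dcut E ends \<sigma> = (if p \<noteq> q then bt else 1) * bt ^ dcut (E - {e}) ends \<sigma>"
    unfolding dcut_remove[where a=a and b=b and e=e and ends=ends and \<sigma>=\<sigma>, OF assms] using s by (simp add: power_add)
  thus "complex_of_real (bt ^ dcut E ends \<sigma>) * (\<Prod>v\<in>{v \<in> V. \<sigma> v}. y v) =
    (if p \<noteq> q then complex_of_real bt else 1) *
    (complex_of_real (bt ^ dcut (E - {e}) ends \<sigma>) * (\<Prod>v\<in>{v \<in> V. \<sigma> v}. y v))"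
    by (cases "p = q") (simp_all add: mult.assoc)
qed

lemma Z_edge:
  assumes "finite V" "finite E" "e \<in> E" "ends e = (a,b) \<or> ends e = (b,a)"
  shows "Z_I V E ends bt y = Fpq V (E-{e}) ends bt a b True True y + complex_of_real bt * Fpq V (E-{e}) ends bt a b True False y
     + complex_of_real bt * Fpq V (E-{e}) ends bt a b False True y + Fpq V (E-{e}) ends bt a b False False y"
  unfolding Z_split[OF assms(1), of E ends bt y a b] Fpq_edge[where a=a and b=b and e=e and ends=ends, OF assms(2-4)] by simp

lemma reach_remove:
  assumes "(adj E ends)\<^sup>*\<^sup>* v u" "e \<in> E" "ends e = (a,b) \<or> ends e = (b,a)"
  shows "(adj (E-{e}) ends)\<^sup>*\<^sup>* v u \<or> (adj (E-{e}) ends)\<^sup>*\<^sup>* v a \<or> (adj (E-{e}) ends)\<^sup>*\<^sup>* v b"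
  using assms(1)
proof (induction rule: rtranclp_induct)
  case base
  then show ?case by simp
next
  case (step x z)
  from step.IH show ?case
  proof (elim disjE)
    assume vx: "(adj (E-{e}) ends)\<^sup>*\<^sup>* v x"
    from step.hyps(2) obtain e' where e': "e' \<in> E" "ends e' = (x,z) \<or> ends e' = (z,x)"
      unfolding adj_def by blast
    show ?thesis
    proof (cases "e' = e")
      case True
      hence "x = a \<or> x = b" using e'(2) assms(3) by auto
      thus ?thesis using vx by auto
    next
      case False
      hence "adj (E-{e}) ends x z" using e' unfolding adj_def by blast
      thus ?thesis using vx by (meson rtranclp.rtrancl_into_rtrancl)
    qed
  qed auto
qed

lemma step_into:
  assumes "(R)\<^sup>*\<^sup>* x u" "\<not> Q x" "Q u"
  shows "\<exists>p q. R p q \<and> \<not> Q p \<and> Q q"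
  using assms
proof (induction rule: rtranclp_induct)
  case base
  then show ?case by simp
next
  case (step y z)
  show ?case
  proof (cases "Q y")
    case True
    then show ?thesis using step by blast
  next
    case False
    then show ?thesis using step by blast
  qed
qed

lemma Z_empty:
  assumes "finite V"
  shows "Z_I V {} ends bt y = (\<Prod>v\<in>V. 1 + y v)"
proof -
  have "(\<Prod>v\<in>V. 1 + y v) = (\<Prod>x\<in>V. \<Sum>j\<in>(UNIV::bool set). if j then y x else 1)"
    by (simp add: UNIV_bool add.commute)
  also have "\<dots> = (\<Sum>g\<in>PiE V (\<lambda>_. UNIV). \<Prod>x\<in>V. if g x then y x else 1)"
    by (rule prod_sum_PiE) (use assms in auto)
  also have "\<dots> = (\<Sum>g\<in>spins V. \<Prod>x\<in>{x\<in>V. g x}. y x)"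
    unfolding spins_def using assms by (intro sum.cong refl) (simp add: prod.inter_filter)
  also have "\<dots> = Z_I V {} ends bt y"
    unfolding Z_I_def by (simp add: dcut_def)
  finally show ?thesis by simp
qed

lemma LY_disk_aux:
  fixes V :: "'a set" and E :: "'e set" and ends :: "'e \<Rightarrow> 'a \<times> 'a"
  assumes V: "finite V" and bt: "0 < bt" "bt < 1" and E: "finite E"
  shows "(\<forall>e\<in>E. fst (ends e) \<in> V \<and> snd (ends e) \<in> V) \<longrightarrow>
    (\<forall>y. (\<forall>v\<in>V. cmod (y v) \<le> 1) \<and> (\<forall>v\<in>V. \<exists>u\<in>V. cmod (y u) < 1 \<and> (adj E ends)\<^sup>*\<^sup>* v u)
       \<longrightarrow> Z_I V E ends bt y \<noteq> 0)"
  using E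
proof (induction E rule: finite_psubset_induct)
  case (psubset E)
  show ?case
  proof (intro impI allI, elim conjE)
    fix y :: "'a \<Rightarrow> complex"
    assume ev: "\<forall>e\<in>E. fst (ends e) \<in> V \<and> snd (ends e) \<in> V"
      and y1: "\<forall>v\<in>V. cmod (y v) \<le> 1"
      and reach: "\<forall>v\<in>V. \<exists>u\<in>V. cmod (y u) < 1 \<and> (adj E ends)\<^sup>*\<^sup>* v u"
    show "Z_I V E ends bt y \<noteq> 0"
    proof (cases "E = {}")
      case True
      have "\<forall>v\<in>V. cmod (y v) < 1"
      proof
        fix v assume "v \<in> V"
        then obtain u where u: "u \<in> V" "cmod (y u) < 1" "(adj E ends)\<^sup>*\<^sup>* v u" using reach by blast
        have "v = u" using u(3) True by (cases rule: rtranclp.cases) (auto simp: adj_def)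
        thus "cmod (y v) < 1" using u by simp
      qed
      hence "\<forall>v\<in>V. 1 + y v \<noteq> 0"
        by (metis add_eq_0_iff norm_minus_cancel norm_one order_less_irrefl)
      thus ?thesis using True Z_empty[OF V, of ends bt y] V by simp
    next
      case False
      then obtain e0 where e0: "e0 \<in> E" by blast
      have "\<exists>e a b. e \<in> E \<and> (ends e = (a,b) \<or> ends e = (b,a)) \<and> a \<in> V \<and> b \<in> V \<and> cmod (y a) < 1"
      proof (cases "cmod (y (fst (ends e0))) < 1")
        case True
        thus ?thesis using e0 ev by (intro exI[of _ e0] exI[of _ "fst (ends e0)"] exI[of _ "snd (ends e0)"]) auto
      next
        case False
        have x: "fst (ends e0) \<in> V" using e0 ev by auto
        then obtain u where u: "u \<in> V" "cmod (y u) < 1" "(adj E ends)\<^sup>*\<^sup>* (fst (ends e0)) u" using reach by blast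
        obtain p q where pq: "adj E ends p q" "\<not> cmod (y p) < 1" "cmod (y q) < 1"
          using step_into[of "adj E ends" _ u "\<lambda>z. cmod (y z) < 1", OF u(3) False u(2)] by blast
        then obtain e where e: "e \<in> E" "ends e = (p,q) \<or> ends e = (q,p)" unfolding adj_def by blast
        have "p \<in> V" "q \<in> V" using e ev by auto
        thus ?thesis using e pq by (intro exI[of _ e] exI[of _ q] exI[of _ p]) auto
      qed
      then obtain e a b where e: "e \<in> E" "ends e = (a,b) \<or> ends e = (b,a)" and ab: "a \<in> V" "b \<in> V"
        and ya: "cmod (y a) < 1" by blast
      define E' where "E' = E - {e}"
      have sub: "E' \<subset> E" using e(1) by (auto simp: E'_def)
      have ev': "\<forall>e\<in>E'. fst (ends e) \<in> V \<and> snd (ends e) \<in> V" using ev by (auto simp: E'_def)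
      have IH: "\<And>y. (\<forall>v\<in>V. cmod (y v) \<le> 1) \<Longrightarrow> (\<forall>v\<in>V. \<exists>u\<in>V. cmod (y u) < 1 \<and> (adj E' ends)\<^sup>*\<^sup>* v u)
          \<Longrightarrow> Z_I V E' ends bt y \<noteq> 0"
        using psubset.IH[OF sub] ev' by blast
      have transfer: "\<forall>v\<in>V. \<exists>u\<in>V. cmod (y' u) < 1 \<and> (adj E' ends)\<^sup>*\<^sup>* v u"
        if yy: "\<And>u. u \<noteq> a \<Longrightarrow> u \<noteq> b \<Longrightarrow> y' u = y u" and ya': "cmod (y' a) < 1" and yb': "cmod (y' b) < 1" for y'
      proof
        fix v assume "v \<in> V"
        then obtain u where u: "u \<in> V" "cmod (y u) < 1" "(adj E ends)\<^sup>*\<^sup>* v u" using reach by blast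
        have "cmod (y' u) < 1" using u(2) yy ya' yb' by (cases "u = a \<or> u = b") auto
        thus "\<exists>u\<in>V. cmod (y' u) < 1 \<and> (adj E' ends)\<^sup>*\<^sup>* v u"
          using reach_remove[where a=a and b=b and e=e and ends=ends, OF u(3) e] u(1) ab ya' yb' unfolding E'_def by blast
      qed
      show ?thesis
      proof (cases "a = b")
        case True
        have "dcut E ends \<sigma> = dcut E' ends \<sigma>" for \<sigma>
          using dcut_remove[where a=a and b=b and e=e and ends=ends and \<sigma>=\<sigma>, OF psubset.hyps e] True by (simp add: E'_def)
        hence "Z_I V E ends bt y = Z_I V E' ends bt y" by (simp add: Z_I_def)
        moreover have "Z_I V E' ends bt y \<noteq> 0"
          using IH[OF y1 transfer[of y]] ya True by blast
        ultimately show ?thesis by simp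
      next
        case False
        note V' = V ab False
        define y1 where "y1 = y(a:=1, b:=1)"
        define FF where "FF = Fpq V E' ends bt a b False False y1"
        define TF where "TF = Fpq V E' ends bt a b True False y1"
        define FT where "FT = Fpq V E' ends bt a b False True y1"
        define TT where "TT = Fpq V E' ends bt a b True True y1"
        have P: "\<forall>a' b'. cmod a' < 1 \<longrightarrow> cmod b' < 1 \<longrightarrow> FF + TF*a' + FT*b' + TT*a'*b' \<noteq> 0"
        proof (intro allI impI)
          fix a' b' :: complex assume a': "cmod a' < 1" and b': "cmod b' < 1"
          have "\<forall>v\<in>V. cmod ((y(a:=a', b:=b')) v) \<le> 1" using y1 a' b' by auto
          moreover have "\<forall>v\<in>V. \<exists>u\<in>V. cmod ((y(a:=a', b:=b')) u) < 1 \<and> (adj E' ends)\<^sup>*\<^sup>* v u"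
            by (rule transfer) (use a' b' False in auto)
          ultimately have "Z_I V E' ends bt (y(a:=a', b:=b')) \<noteq> 0" by (rule IH)
          thus "FF + TF*a' + FT*b' + TT*a'*b' \<noteq> 0"
            unfolding Z_biaff[OF V'] FF_def TF_def FT_def TT_def y1_def .
        qed
        have yb: "cmod (y b) \<le> 1" using y1 ab by auto
        have "FF + bt*TF*(y a) + bt*FT*(y b) + TT*(y a)*(y b) \<noteq> 0"
          by (rule edge_step[OF bt P ya yb])
        moreover have sc: "\<And>p q. Fpq V E' ends bt a b p q y = (if p then y a else 1) * (if q then y b else 1) * Fpq V E' ends bt a b p q y1"
          using Fpq_scale[OF V', where E=E' and y=y and a'="y a" and b'="y b"] unfolding y1_def
          by (simp only: fun_upd_triv)
        moreover have "Z_I V E ends bt y = Fpq V E' ends bt a b True True y + complex_of_real bt * Fpq V E' ends bt a b True False y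
           + complex_of_real bt * Fpq V E' ends bt a b False True y + Fpq V E' ends bt a b False False y"
          unfolding E'_def by (rule Z_edge[where a=a and b=b and e=e and ends=ends, OF V psubset.hyps e])
        ultimately show ?thesis unfolding FF_def TF_def FT_def TT_def
          by (simp only: sc if_True if_False mult_1_left mult_1_right) (simp add: algebra_simps)
      qed
    qed
  qed
qed

lemma LY_disk:
  assumes "multigraph V E ends" "0 < bt" "bt < 1"
    "\<forall>v\<in>V. cmod (y v) \<le> 1" "\<forall>v\<in>V. \<exists>u\<in>V. cmod (y u) < 1 \<and> (adj E ends)\<^sup>*\<^sup>* v u"
  shows "Z_I V E ends bt y \<noteq> 0"
  using LY_disk_aux[of V bt E ends] assms unfolding multigraph_def by blast

lemma prod_split: "finite A \<Longrightarrow> prod f A = prod f {x\<in>A. P x} * prod f {x\<in>A. \<not> P x}"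
proof -
  assume "finite A"
  have "A = {x\<in>A. P x} \<union> {x\<in>A. \<not> P x}" by auto
  hence "prod f A = prod f ({x\<in>A. P x} \<union> {x\<in>A. \<not> P x})" by simp
  also have "\<dots> = prod f {x\<in>A. P x} * prod f {x\<in>A. \<not> P x}"
    using \<open>finite A\<close> by (intro prod.union_disjoint) auto
  finally show ?thesis .
qed

lemma Z_flip:
  fixes y :: "'a \<Rightarrow> complex"
  assumes V: "finite V" and ev: "\<forall>e\<in>E. fst (ends e) \<in> V \<and> snd (ends e) \<in> V"
    and y0: "\<forall>v\<in>V. y v \<noteq> 0"
  shows "Z_I V E ends bt y = (\<Prod>v\<in>V. y v) * Z_I V E ends bt (\<lambda>v. inverse (y v))"
proof -
  define fl where "fl = (\<lambda>\<sigma>::'a\<Rightarrow>bool. \<lambda>v. if v \<in> V then \<not> \<sigma> v else undefined)"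
  define h where "h = (\<lambda>\<tau>. (\<Prod>v\<in>V. y v) * (complex_of_real (bt ^ dcut E ends \<tau>) * (\<Prod>v\<in>{v\<in>V. \<tau> v}. inverse (y v))))"
  have "Z_I V E ends bt y = sum h (spins V)"
    unfolding Z_I_def
  proof (rule sum.reindex_bij_witness[where i=fl and j=fl])
    fix \<sigma> assume s: "\<sigma> \<in> spins V"
    show "fl (fl \<sigma>) = \<sigma>"
    proof
      fix x show "fl (fl \<sigma>) x = \<sigma> x"
        using PiE_arb[of \<sigma> V "\<lambda>_. UNIV" x] s by (auto simp: fl_def spins_def)
    qed
    show "fl \<sigma> \<in> spins V" by (auto simp: fl_def spins_def PiE_iff extensional_def)
    have dc: "dcut E ends (fl \<sigma>) = dcut E ends \<sigma>"
    proof -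
      have "{e\<in>E. fl \<sigma> (fst (ends e)) \<noteq> fl \<sigma> (snd (ends e))} = {e\<in>E. \<sigma> (fst (ends e)) \<noteq> \<sigma> (snd (ends e))}"
        using ev by (auto simp: fl_def)
      thus ?thesis by (simp add: dcut_def)
    qed
    have st: "{v\<in>V. fl \<sigma> v} = {v\<in>V. \<not> \<sigma> v}" by (auto simp: fl_def)
    have "(\<Prod>v\<in>V. y v) = (\<Prod>v\<in>{v\<in>V. \<sigma> v}. y v) * (\<Prod>v\<in>{v\<in>V. \<not> \<sigma> v}. y v)"
      by (rule prod_split[OF V])
    moreover have "(\<Prod>v\<in>{v\<in>V. \<not> \<sigma> v}. y v) * (\<Prod>v\<in>{v\<in>V. \<not> \<sigma> v}. inverse (y v)) = 1"
    proof -
      have "(\<Prod>v\<in>{v\<in>V. \<not> \<sigma> v}. y v) * (\<Prod>v\<in>{v\<in>V. \<not> \<sigma> v}. inverse (y v))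
          = (\<Prod>v\<in>{v\<in>V. \<not> \<sigma> v}. y v * inverse (y v))" by (simp add: prod.distrib)
      also have "\<dots> = (\<Prod>v\<in>{v\<in>V. \<not> \<sigma> v}. 1)" using y0 by (intro prod.cong) auto
      finally show ?thesis by simp
    qed
    ultimately show "h (fl \<sigma>) = complex_of_real (bt ^ dcut E ends \<sigma>) * (\<Prod>v\<in>{v\<in>V. \<sigma> v}. y v)"
      unfolding h_def dc st by (simp add: algebra_simps)
  next
    fix \<sigma> assume s: "\<sigma> \<in> spins V"
    show "fl (fl \<sigma>) = \<sigma>"
    proof
      fix x show "fl (fl \<sigma>) x = \<sigma> x"
        using PiE_arb[of \<sigma> V "\<lambda>_. UNIV" x] s by (auto simp: fl_def spins_def)
    qed
    show "fl \<sigma> \<in> spins V" by (auto simp: fl_def spins_def PiE_iff extensional_def)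
  qed
  also have "\<dots> = (\<Prod>v\<in>V. y v) * Z_I V E ends bt (\<lambda>v. inverse (y v))"
    unfolding h_def Z_I_def by (simp add: sum_distrib_left)
  finally show ?thesis .
qed

lemma LY_ext:
  assumes mg: "multigraph V E ends" and cg: "connected_graph V E ends" and bt: "0 < bt" "bt < 1"
    and y1: "\<forall>v\<in>V. 1 \<le> cmod (y v)" and u: "u \<in> V" "1 < cmod (y u)"
  shows "Z_I V E ends bt y \<noteq> 0"
proof -
  have V: "finite V" and ev: "\<forall>e\<in>E. fst (ends e) \<in> V \<and> snd (ends e) \<in> V"
    using mg by (auto simp: multigraph_def)
  have y0: "\<forall>v\<in>V. y v \<noteq> 0" using y1 by fastforce
  have "Z_I V E ends bt (\<lambda>v. inverse (y v)) \<noteq> 0"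
  proof (rule LY_disk[OF mg bt])
    show "\<forall>v\<in>V. cmod (inverse (y v)) \<le> 1" using y1 by (simp add: norm_inverse inverse_le_1_iff)
    show "\<forall>v\<in>V. \<exists>u\<in>V. cmod (inverse (y u)) < 1 \<and> (adj E ends)\<^sup>*\<^sup>* v u"
      using cg u by (auto simp: connected_graph_def norm_inverse inverse_less_1_iff intro!: bexI[of _ u])
  qed
  moreover have "(\<Prod>v\<in>V. y v) \<noteq> 0" using y0 V by simp
  ultimately show ?thesis using Z_flip[OF V ev y0] by simp
qed

definition Gv :: "'a set \<Rightarrow> 'e set \<Rightarrow> ('e \<Rightarrow> 'a \<times> 'a) \<Rightarrow> real \<Rightarrow> 'a \<Rightarrow> ('a \<Rightarrow> complex) \<Rightarrow> complex" where
  "Gv V E ends bt v y = (\<Sum>\<sigma>\<in>{\<sigma>\<in>spins V. \<sigma> v}. complex_of_real (bt ^ dcut E ends \<sigma>) * (\<Prod>u\<in>{u\<in>V. \<sigma> u}. y u))"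

definition Hv :: "'a set \<Rightarrow> 'e set \<Rightarrow> ('e \<Rightarrow> 'a \<times> 'a) \<Rightarrow> real \<Rightarrow> 'a \<Rightarrow> ('a \<Rightarrow> complex) \<Rightarrow> complex" where
  "Hv V E ends bt v y = (\<Sum>\<sigma>\<in>{\<sigma>\<in>spins V. \<sigma> v}. complex_of_real (bt ^ dcut E ends \<sigma>) * (\<Prod>u\<in>{u\<in>V. \<sigma> u} - {v}. y u))"

lemma aff_gen:
  assumes V: "finite V" "v \<in> V"
  shows "Z_I V E ends bt (y(v:=t)) =
    (\<Sum>\<sigma>\<in>{\<sigma>\<in>spins V. \<not> \<sigma> v}. complex_of_real (bt ^ dcut E ends \<sigma>) * (\<Prod>u\<in>{u\<in>V. \<sigma> u}. y u))
    + t * Hv V E ends bt v y"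
proof -
  have fs: "finite (spins V)" using finite_spins[OF V(1)] .
  have A: "(\<Sum>\<sigma>\<in>{\<sigma>\<in>spins V. \<sigma> v}. complex_of_real (bt ^ dcut E ends \<sigma>) * (\<Prod>u\<in>{u\<in>V. \<sigma> u}. (y(v:=t)) u))
      = t * Hv V E ends bt v y"
    unfolding Hv_def sum_distrib_left
  proof (rule sum.cong[OF refl])
    fix \<sigma> assume "\<sigma> \<in> {\<sigma>\<in>spins V. \<sigma> v}"
    hence vs: "v \<in> {u\<in>V. \<sigma> u}" using V by auto
    have fS: "finite {u\<in>V. \<sigma> u}" using V by simp
    have "(\<Prod>u\<in>{u\<in>V. \<sigma> u}. (y(v:=t)) u) = (y(v:=t)) v * (\<Prod>u\<in>{u\<in>V. \<sigma> u} - {v}. (y(v:=t)) u)"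
      by (rule prod.remove[OF fS vs])
    also have "(\<Prod>u\<in>{u\<in>V. \<sigma> u} - {v}. (y(v:=t)) u) = (\<Prod>u\<in>{u\<in>V. \<sigma> u} - {v}. y u)"
      by (rule prod.cong) auto
    finally have "(\<Prod>u\<in>{u\<in>V. \<sigma> u}. (y(v:=t)) u) = t * (\<Prod>u\<in>{u\<in>V. \<sigma> u} - {v}. y u)" by simp
    thus "complex_of_real (bt ^ dcut E ends \<sigma>) * (\<Prod>u\<in>{u\<in>V. \<sigma> u}. (y(v:=t)) u) =
      t * (complex_of_real (bt ^ dcut E ends \<sigma>) * (\<Prod>u\<in>{u\<in>V. \<sigma> u} - {v}. y u))" by simp
  qed
  have B: "(\<Sum>\<sigma>\<in>{\<sigma>\<in>spins V. \<not> \<sigma> v}. complex_of_real (bt ^ dcut E ends \<sigma>) * (\<Prod>u\<in>{u\<in>V. \<sigma> u}. (y(v:=t)) u))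
      = (\<Sum>\<sigma>\<in>{\<sigma>\<in>spins V. \<not> \<sigma> v}. complex_of_real (bt ^ dcut E ends \<sigma>) * (\<Prod>u\<in>{u\<in>V. \<sigma> u}. y u))"
  proof (rule sum.cong[OF refl])
    fix \<sigma> assume "\<sigma> \<in> {\<sigma>\<in>spins V. \<not> \<sigma> v}"
    hence "v \<notin> {u\<in>V. \<sigma> u}" by auto
    hence "(\<Prod>u\<in>{u\<in>V. \<sigma> u}. (y(v:=t)) u) = (\<Prod>u\<in>{u\<in>V. \<sigma> u}. y u)"
      by (intro prod.cong) auto
    thus "complex_of_real (bt ^ dcut E ends \<sigma>) * (\<Prod>u\<in>{u\<in>V. \<sigma> u}. (y(v:=t)) u) =
      complex_of_real (bt ^ dcut E ends \<sigma>) * (\<Prod>u\<in>{u\<in>V. \<sigma> u}. y u)" by simp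
  qed
  show ?thesis unfolding Z_I_def sum_split[OF fs, where P="\<lambda>\<sigma>. \<sigma> v"] A B by (simp add: add.commute)
qed

lemma aff1:
  assumes V: "finite V" "v \<in> V"
  shows "Z_I V E ends bt (y(v:=t)) = Z_I V E ends bt (y(v:=0)) + t * Hv V E ends bt v y"
  using aff_gen[OF V, of E ends bt y t] aff_gen[OF V, of E ends bt y 0] by simp

lemma Hv_upd: "Hv V E ends bt v (y(v:=c)) = Hv V E ends bt v y"
  unfolding Hv_def by (intro sum.cong refl arg_cong2[where f="(*)"] prod.cong) auto

lemma GH:
  assumes V: "finite V" "v \<in> V"
  shows "Gv V E ends bt v y = y v * Hv V E ends bt v y"
  unfolding Gv_def Hv_def sum_distrib_left
proof (rule sum.cong[OF refl])
  fix \<sigma> assume "\<sigma> \<in> {\<sigma>\<in>spins V. \<sigma> v}"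
  hence vs: "v \<in> {u\<in>V. \<sigma> u}" using V by auto
  have fS: "finite {u\<in>V. \<sigma> u}" using V by simp
  show "complex_of_real (bt ^ dcut E ends \<sigma>) * (\<Prod>u\<in>{u\<in>V. \<sigma> u}. y u) =
     y v * (complex_of_real (bt ^ dcut E ends \<sigma>) * (\<Prod>u\<in>{u\<in>V. \<sigma> u} - {v}. y u))"
    using prod.remove[OF fS vs, of y] by (simp add: algebra_simps)
qed

lemma Zw_eq: "Z_w V E ends bt w z = Z_I V E ends bt (\<lambda>u. z u ^ w u)"
  by (simp add: Z_w_def Z_I_def)

lemma ZI_eq: "Z_I V E ends bt = Z_w V E ends bt (\<lambda>_. 1)"
  by (rule ext) (simp add: Z_w_def Z_I_def)

lemma DG_w:
  assumes V: "finite V" and w: "\<forall>v\<in>V. 0 < w v"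
  shows "DG V (Z_w V E ends bt w) z = (\<Sum>v\<in>V. of_nat (w v) * Gv V E ends bt v (\<lambda>u. z u ^ w u))"
  unfolding DG_def
proof (rule sum.cong[OF refl])
  fix v assume v: "v \<in> V"
  define Y where "Y = (\<lambda>u. z u ^ w u)"
  define k where "k = w v"
  have k: "0 < k" using w v by (simp add: k_def)
  define C0 where "C0 = Z_I V E ends bt (Y(v:=0))"
  define H where "H = Hv V E ends bt v Y"
  have f: "(\<lambda>t. Z_w V E ends bt w (z(v := t))) = (\<lambda>t. C0 + t^k * H)"
  proof
    fix t
    have "(\<lambda>u. (z(v := t)) u ^ w u) = Y(v := t ^ k)" by (auto simp: Y_def k_def)
    hence "Z_w V E ends bt w (z(v := t)) = Z_I V E ends bt (Y(v := t ^ k))" by (simp add: Zw_eq)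
    also have "\<dots> = Z_I V E ends bt (Y(v:=0)) + t^k * Hv V E ends bt v Y"
      by (rule aff1[OF V v])
    also have "\<dots> = C0 + t^k * H" by (simp add: C0_def H_def)
    finally show "Z_w V E ends bt w (z(v := t)) = C0 + t^k * H" .
  qed
  have "((\<lambda>t. C0 + t^k * H) has_field_derivative (of_nat k * z v ^ (k - 1) * H)) (at (z v))"
    by (auto intro!: derivative_eq_intros)
  hence "deriv (\<lambda>t. Z_w V E ends bt w (z(v := t))) (z v) = of_nat k * z v ^ (k - 1) * H"
    unfolding f by (rule DERIV_imp_deriv)
  moreover have "z v * (z v ^ (k - 1)) = Y v" using k by (simp add: Y_def k_def power_eq_if[of _ k] flip: power_Suc)
  moreover have "Gv V E ends bt v Y = Y v * H" unfolding H_def by (rule GH[OF V v])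
  ultimately show "z v * deriv (\<lambda>t. Z_w V E ends bt w (z(v := t))) (z v) = of_nat (w v) * Gv V E ends bt v Y"
    by (simp add: k_def algebra_simps)
qed

lemma pderiv_sum_gen: "finite A \<Longrightarrow> pderiv (\<Sum>x\<in>A. f x) = (\<Sum>x\<in>A. pderiv (f x))"
  by (induction A rule: finite_induct) (simp_all add: pderiv_add)

lemma caseA:
  assumes mg: "multigraph V E ends" and cg: "connected_graph V E ends" and bt: "0 < bt" "bt < 1"
    and w: "\<forall>v\<in>V. 0 < w v" and y1: "\<forall>v\<in>V. 1 \<le> cmod (y v)"
    and Z: "Z_I V E ends bt y \<noteq> 0"
  shows "(\<Sum>v\<in>V. of_nat (w v) * Gv V E ends bt v y) \<noteq> 0"
proof -
  have V: "finite V" and ev: "\<forall>e\<in>E. fst (ends e) \<in> V \<and> snd (ends e) \<in> V"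
    using mg by (auto simp: multigraph_def)
  have Vne: "V \<noteq> {}" using cg by (simp add: connected_graph_def)
  have fs: "finite (spins V)" by (rule finite_spins[OF V])
  define W where "W = (\<lambda>\<sigma>. \<Sum>v\<in>{v\<in>V. \<sigma> v}. w v)"
  define c where "c = (\<lambda>\<sigma>. complex_of_real (bt ^ dcut E ends \<sigma>) * (\<Prod>v\<in>{v\<in>V. \<sigma> v}. y v))"
  define p where "p = (\<Sum>\<sigma>\<in>spins V. monom (c \<sigma>) (W \<sigma>))"
  have pv: "poly p t = Z_I V E ends bt (\<lambda>v. t^(w v) * y v)" for t
    unfolding p_def poly_sum poly_monom Z_I_def
  proof (rule sum.cong[OF refl])
    fix \<sigma> assume "\<sigma> \<in> spins V"
    have "t ^ W \<sigma> = (\<Prod>v\<in>{v\<in>V. \<sigma> v}. t ^ w v)" unfolding W_def by (rule power_sum)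
    thus "c \<sigma> * t ^ W \<sigma> = complex_of_real (bt ^ dcut E ends \<sigma>) * (\<Prod>v\<in>{v\<in>V. \<sigma> v}. t ^ w v * y v)"
      by (simp add: c_def prod.distrib algebra_simps)
  qed
  have pd: "poly (pderiv p) 1 = (\<Sum>\<sigma>\<in>spins V. of_nat (W \<sigma>) * c \<sigma>)"
    unfolding p_def pderiv_sum_gen[OF fs] poly_sum pderiv_monom poly_monom by simp
  have sw: "(\<Sum>\<sigma>\<in>spins V. of_nat (W \<sigma>) * c \<sigma>) = (\<Sum>v\<in>V. of_nat (w v) * Gv V E ends bt v y)"
  proof -
    have "(\<Sum>\<sigma>\<in>spins V. of_nat (W \<sigma>) * c \<sigma>) = (\<Sum>\<sigma>\<in>spins V. \<Sum>v\<in>V. if \<sigma> v then of_nat (w v) * c \<sigma> else 0)"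
    proof (rule sum.cong[OF refl])
      fix \<sigma> assume "\<sigma> \<in> spins V"
      have "W \<sigma> = (\<Sum>v\<in>V. if \<sigma> v then w v else 0)" unfolding W_def using V by (simp add: sum.inter_filter)
      hence "(of_nat (W \<sigma>) :: complex) = (\<Sum>v\<in>V. if \<sigma> v then of_nat (w v) else 0)"
        by (simp add: of_nat_sum if_distrib cong: if_cong)
      hence "of_nat (W \<sigma>) * c \<sigma> = (\<Sum>v\<in>V. (if \<sigma> v then of_nat (w v) else 0) * c \<sigma>)"
        by (simp add: sum_distrib_right)
      also have "\<dots> = (\<Sum>v\<in>V. if \<sigma> v then of_nat (w v) * c \<sigma> else 0)" by (intro sum.cong refl) simp
      finally show "of_nat (W \<sigma>) * c \<sigma> = (\<Sum>v\<in>V. if \<sigma> v then of_nat (w v) * c \<sigma> else 0)" .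
    qed
    also have "\<dots> = (\<Sum>v\<in>V. \<Sum>\<sigma>\<in>spins V. if \<sigma> v then of_nat (w v) * c \<sigma> else 0)" by (rule sum.swap)
    also have "\<dots> = (\<Sum>v\<in>V. of_nat (w v) * Gv V E ends bt v y)"
    proof (rule sum.cong[OF refl])
      fix v assume "v \<in> V"
      show "(\<Sum>\<sigma>\<in>spins V. if \<sigma> v then of_nat (w v) * c \<sigma> else 0) = of_nat (w v) * Gv V E ends bt v y"
        unfolding Gv_def sum_distrib_left c_def using fs by (simp add: sum.inter_filter cong: if_cong)
    qed
    finally show ?thesis .
  qed
  have roots: "\<forall>t. poly p t = 0 \<longrightarrow> cmod t \<le> 1"
  proof (intro allI impI)
    fix t assume pt: "poly p t = 0"
    show "cmod t \<le> 1"
    proof (rule ccontr)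
      assume "\<not> cmod t \<le> 1"
      hence t1: "1 < cmod t" by simp
      obtain u where u: "u \<in> V" using Vne by blast
      have ge: "\<forall>v\<in>V. 1 \<le> cmod (t^(w v) * y v)"
      proof
        fix v assume v: "v \<in> V"
        have "1 \<le> cmod t ^ w v" using t1 by (simp add: one_le_power)
        moreover have "1 \<le> cmod (y v)" using y1 v by simp
        ultimately have "1 * 1 \<le> cmod t ^ w v * cmod (y v)" by (intro mult_mono) auto
        thus "1 \<le> cmod (t^(w v) * y v)" by (simp add: norm_mult norm_power)
      qed
      have "1 < cmod t ^ w u" using t1 w u by (simp add: one_less_power)
      moreover have "1 \<le> cmod (y u)" using y1 u by simp
      ultimately have "1 * 1 < cmod t ^ w u * cmod (y u)" by (intro mult_less_le_imp_less) auto
      hence gt: "1 < cmod (t^(w u) * y u)" by (simp add: norm_mult norm_power)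
      have "Z_I V E ends bt (\<lambda>v. t^(w v) * y v) \<noteq> 0" by (rule LY_ext[OF mg cg bt ge u gt])
      thus False using pt pv by simp
    qed
  qed
  have p1: "poly p 1 \<noteq> 0" using Z pv[of 1] by simp
  define N where "N = (\<Sum>v\<in>V. w v)"
  define \<sigma>0 where "\<sigma>0 = (\<lambda>v. if v \<in> V then True else undefined)"
  have s0: "\<sigma>0 \<in> spins V" by (auto simp: \<sigma>0_def spins_def PiE_iff extensional_def)
  have WN: "W \<sigma> = N \<longleftrightarrow> \<sigma> = \<sigma>0" if s: "\<sigma> \<in> spins V" for \<sigma>
  proof
    assume WN: "W \<sigma> = N"
    show "\<sigma> = \<sigma>0"
    proof (rule ccontr)
      assume "\<sigma> \<noteq> \<sigma>0"
      then obtain x where "\<sigma> x \<noteq> \<sigma>0 x" by auto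
      moreover have "x \<in> V" using calculation PiE_arb[of \<sigma> V "\<lambda>_. UNIV" x] s
        by (auto simp: \<sigma>0_def spins_def)
      ultimately have x: "x \<in> V" "\<not> \<sigma> x" by (auto simp: \<sigma>0_def)
      have "N = W \<sigma> + (\<Sum>v\<in>{v\<in>V. \<not> \<sigma> v}. w v)" unfolding N_def W_def by (rule sum_split[OF V])
      moreover have "w x \<le> (\<Sum>v\<in>{v\<in>V. \<not> \<sigma> v}. w v)" using x V by (intro member_le_sum) auto
      moreover have "0 < w x" using w x by simp
      ultimately show False using WN by linarith
    qed
  next
    assume "\<sigma> = \<sigma>0"
    thus "W \<sigma> = N" by (simp add: W_def N_def \<sigma>0_def)
  qed
  have "coeff p N = (\<Sum>\<sigma>\<in>spins V. if W \<sigma> = N then c \<sigma> else 0)"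
    unfolding p_def coeff_sum coeff_monom by simp
  also have "\<dots> = (\<Sum>\<sigma>\<in>spins V. if \<sigma> = \<sigma>0 then c \<sigma> else 0)"
    using WN by (intro sum.cong refl) auto
  also have "\<dots> = c \<sigma>0" using s0 fs by simp
  also have "\<dots> = (\<Prod>v\<in>V. y v)"
  proof -
    have "{e\<in>E. \<sigma>0 (fst (ends e)) \<noteq> \<sigma>0 (snd (ends e))} = {}" using ev by (auto simp: \<sigma>0_def)
    hence "dcut E ends \<sigma>0 = 0" unfolding dcut_def by (metis card.empty)
    moreover have "{v\<in>V. \<sigma>0 v} = V" by (auto simp: \<sigma>0_def)
    ultimately show ?thesis by (simp add: c_def)
  qed
  finally have cN: "coeff p N \<noteq> 0" using y1 V by fastforce
  have "0 < N" unfolding N_def using w V Vne by (intro sum_pos) auto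
  hence "0 < degree p" using le_degree[OF cN] by simp
  hence "0 < Re (poly (pderiv p) 1 / poly p 1)" using root_re[OF refl roots p1] by blast
  hence "poly (pderiv p) 1 \<noteq> 0" by auto
  thus ?thesis using pd sw by simp
qed

lemma caseB:
  assumes mg: "multigraph V E ends" and cg: "connected_graph V E ends" and bt: "0 < bt" "bt < 1"
    and w: "\<forall>v\<in>V. 0 < w v" and y1: "\<forall>v\<in>V. 1 \<le> cmod (y v)"
    and Z: "Z_I V E ends bt y = 0"
  shows "(\<Sum>v\<in>V. of_nat (w v) * Gv V E ends bt v y) \<noteq> 0"
proof -
  have V: "finite V" and ev: "\<forall>e\<in>E. fst (ends e) \<in> V \<and> snd (ends e) \<in> V"
    using mg by (auto simp: multigraph_def)
  have Vne: "V \<noteq> {}" using cg by (simp add: connected_graph_def)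
  have yeq: "\<forall>v\<in>V. cmod (y v) = 1"
  proof
    fix v assume v: "v \<in> V"
    show "cmod (y v) = 1"
    proof (rule ccontr)
      assume "cmod (y v) \<noteq> 1"
      hence "1 < cmod (y v)" using y1 v by force
      hence "Z_I V E ends bt y \<noteq> 0" by (rule LY_ext[OF mg cg bt y1 v])
      thus False using Z by simp
    qed
  qed
  have Gnz: "Gv V E ends bt v y \<noteq> 0" if v: "v \<in> V" for v
  proof -
    have a1: "Z_I V E ends bt (y(v:=2*y v)) = Z_I V E ends bt (y(v:=0)) + (2*y v) * Hv V E ends bt v y"
      by (rule aff1[OF V v])
    have a2: "Z_I V E ends bt (y(v:=y v)) = Z_I V E ends bt (y(v:=0)) + y v * Hv V E ends bt v y"
      by (rule aff1[OF V v])
    have "Z_I V E ends bt (y(v:=2*y v)) = Gv V E ends bt v y"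
      using a1 a2 Z GH[OF V v, of E ends bt y] by (simp add: algebra_simps)
    moreover have "Z_I V E ends bt (y(v:=2*y v)) \<noteq> 0"
    proof (rule LY_ext[OF mg cg bt _ v])
      show "\<forall>x\<in>V. 1 \<le> cmod ((y(v := 2 * y v)) x)" using yeq y1 v by (auto simp: norm_mult)
      show "1 < cmod ((y(v := 2 * y v)) v)" using yeq v by (simp add: norm_mult)
    qed
    ultimately show ?thesis by simp
  qed
  have pair: "\<exists>l>0. Gv V E ends bt u y = of_real l * Gv V E ends bt v y"
    if uv: "u \<in> V" "v \<in> V" "u \<noteq> v" for u v
  proof -
    note V' = V uv
    define y1' where "y1' = y(u:=1, v:=1)"
    define FF where "FF = Fpq V E ends bt u v False False y1'"
    define TF where "TF = Fpq V E ends bt u v True False y1'"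
    define FT where "FT = Fpq V E ends bt u v False True y1'"
    define TT where "TT = Fpq V E ends bt u v True True y1'"
    have bi: "Z_I V E ends bt (y(u:=a', v:=b')) = FF + TF*a' + FT*b' + TT*a'*b'" for a' b'
      unfolding Z_biaff[OF V'] FF_def TF_def FT_def TT_def y1'_def ..
    have sc: "\<And>p q. Fpq V E ends bt u v p q y = (if p then y u else 1) * (if q then y v else 1) * Fpq V E ends bt u v p q y1'"
      using Fpq_scale[OF V', where E=E and y=y and a'="y u" and b'="y v"] unfolding y1'_def
      by (simp only: fun_upd_triv)
    have fs: "finite (spins V)" by (rule finite_spins[OF V])
    have Gu: "Gv V E ends bt u y = Fpq V E ends bt u v True True y + Fpq V E ends bt u v True False y"
    proof -
      have f1: "finite {\<sigma>\<in>spins V. \<sigma> u}" using fs by simp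
      have e1: "{\<sigma>\<in>{\<sigma>\<in>spins V. \<sigma> u}. \<sigma> v} = {\<sigma>\<in>spins V. \<sigma> u = True \<and> \<sigma> v = True}" by auto
      have e2: "{\<sigma>\<in>{\<sigma>\<in>spins V. \<sigma> u}. \<not> \<sigma> v} = {\<sigma>\<in>spins V. \<sigma> u = True \<and> \<sigma> v = False}" by auto
      show ?thesis unfolding Gv_def Fpq_def sum_split[OF f1, where P="\<lambda>\<sigma>. \<sigma> v"] e1 e2 ..
    qed
    have Gv': "Gv V E ends bt v y = Fpq V E ends bt u v True True y + Fpq V E ends bt u v False True y"
    proof -
      have f1: "finite {\<sigma>\<in>spins V. \<sigma> v}" using fs by simp
      have e1: "{\<sigma>\<in>{\<sigma>\<in>spins V. \<sigma> v}. \<sigma> u} = {\<sigma>\<in>spins V. \<sigma> u = True \<and> \<sigma> v = True}" by auto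
      have e2: "{\<sigma>\<in>{\<sigma>\<in>spins V. \<sigma> v}. \<not> \<sigma> u} = {\<sigma>\<in>spins V. \<sigma> u = False \<and> \<sigma> v = True}" by auto
      show ?thesis unfolding Gv_def Fpq_def sum_split[OF f1, where P="\<lambda>\<sigma>. \<sigma> u"] e1 e2 ..
    qed
    have Gu2: "Gv V E ends bt u y = y u * y v * TT + y u * TF"
      unfolding Gu TT_def TF_def by (simp only: sc if_True if_False mult_1_right)
    have Gv2: "Gv V E ends bt v y = y u * y v * TT + y v * FT"
      unfolding Gv' TT_def FT_def by (simp only: sc if_True if_False mult_1_left mult_1_right)
    have Z0: "FF + TF * y u + FT * y v + TT * y u * y v = 0"
      using bi[of "y u" "y v"] Z by (simp only: fun_upd_triv)
    have H: "\<forall>s r. 1 < cmod (1+s) \<longrightarrow> 1 < cmod (1+r) \<longrightarrow>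
        Gv V E ends bt u y * s + Gv V E ends bt v y * r + (TT * y u * y v) * s * r \<noteq> 0"
    proof (intro allI impI)
      fix s r :: complex assume s: "1 < cmod (1+s)" and r: "1 < cmod (1+r)"
      have "Z_I V E ends bt (y(u := y u * (1+s), v := y v * (1+r))) \<noteq> 0"
      proof (rule LY_ext[OF mg cg bt _ uv(1)])
        show "\<forall>x\<in>V. 1 \<le> cmod ((y(u := y u * (1+s), v := y v * (1+r))) x)"
          using yeq y1 uv s r by (auto simp: norm_mult)
        show "1 < cmod ((y(u := y u * (1+s), v := y v * (1+r))) u)"
          using yeq uv s by (simp add: norm_mult)
      qed
      moreover have "Z_I V E ends bt (y(u := y u * (1+s), v := y v * (1+r))) =
          (FF + TF * y u + FT * y v + TT * y u * y v) + Gv V E ends bt u y * s + Gv V E ends bt v y * r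
          + (TT * y u * y v) * s * r"
        unfolding bi Gu2 Gv2 by (simp add: algebra_simps)
      ultimately show "Gv V E ends bt u y * s + Gv V E ends bt v y * r + (TT * y u * y v) * s * r \<noteq> 0"
        using Z0 by simp
    qed
    show ?thesis by (rule pair_pos[OF Gnz[OF uv(1)] Gnz[OF uv(2)] H])
  qed
  obtain v0 where v0: "v0 \<in> V" using Vne by blast
  have "\<forall>v\<in>V. \<exists>l. l > 0 \<and> Gv V E ends bt v y = of_real l * Gv V E ends bt v0 y"
  proof
    fix v assume v: "v \<in> V"
    show "\<exists>l. l > 0 \<and> Gv V E ends bt v y = of_real l * Gv V E ends bt v0 y"
    proof (cases "v = v0")
      case True thus ?thesis by (intro exI[of _ 1]) simp
    next
      case False thus ?thesis using pair[OF v v0] by blast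
    qed
  qed
  then obtain L where L: "\<forall>v\<in>V. L v > 0 \<and> Gv V E ends bt v y = of_real (L v) * Gv V E ends bt v0 y"
    by metis
  have "(\<Sum>v\<in>V. of_nat (w v) * Gv V E ends bt v y) = (\<Sum>v\<in>V. of_real (real (w v) * L v) * Gv V E ends bt v0 y)"
    using L by (intro sum.cong refl) simp
  also have "\<dots> = of_real (\<Sum>v\<in>V. real (w v) * L v) * Gv V E ends bt v0 y"
    by (simp add: sum_distrib_right)
  finally have eq: "(\<Sum>v\<in>V. of_nat (w v) * Gv V E ends bt v y) = of_real (\<Sum>v\<in>V. real (w v) * L v) * Gv V E ends bt v0 y" .
  have "0 < (\<Sum>v\<in>V. real (w v) * L v)" using V Vne w L by (intro sum_pos) auto
  hence "complex_of_real (\<Sum>v\<in>V. real (w v) * L v) \<noteq> 0" by (metis of_real_eq_0_iff less_irrefl)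
  hence "complex_of_real (\<Sum>v\<in>V. real (w v) * L v) * Gv V E ends bt v0 y \<noteq> 0"
    using Gnz[OF v0] by (metis mult_eq_0_iff)
  thus ?thesis unfolding eq .
qed

lemma main_ne:
  assumes mg: "multigraph V E ends" and cg: "connected_graph V E ends" and bt: "0 < bt" "bt < 1"
    and w: "\<forall>v\<in>V. 0 < w v" and y1: "\<forall>v\<in>V. 1 \<le> cmod (y v)"
  shows "(\<Sum>v\<in>V. of_nat (w v) * Gv V E ends bt v y) \<noteq> 0"
  using caseA[OF assms] caseB[OF assms] by blast

theorem theorem5:
  fixes V :: "'a set" and E :: "'e set" and ends :: "'e \<Rightarrow> 'a \<times> 'a"
  assumes "multigraph V E ends"
    and "connected_graph V E ends"
  shows "(\<forall>\<beta> w z. 0 < \<beta> \<and> \<beta> < 1 \<and> legal_weight V E ends w \<and> (\<forall>v\<in>V. norm (z v) \<ge> 1)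
            \<longrightarrow> DG V (Z_w V E ends \<beta> w) z \<noteq> 0)
       \<and> (\<forall>\<beta> z. 0 < \<beta> \<and> \<beta> < 1 \<and> (\<forall>v\<in>V. norm (z v) \<ge> 1)
            \<longrightarrow> DG V (Z_I V E ends \<beta>) z \<noteq> 0)"
proof -
  have V: "finite V" using assms(1) by (simp add: multigraph_def)
  have gen: "DG V (Z_w V E ends \<beta> w) z \<noteq> 0"
    if b: "0 < \<beta>" "\<beta> < 1" and w: "\<forall>v\<in>V. 0 < w v" and z: "\<forall>v\<in>V. 1 \<le> norm (z v)" for \<beta> w z
  proof -
    have "\<forall>v\<in>V. 1 \<le> cmod (z v ^ w v)" using z by (simp add: norm_power one_le_power)
    hence "(\<Sum>v\<in>V. of_nat (w v) * Gv V E ends \<beta> v (\<lambda>u. z u ^ w u)) \<noteq> 0"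
      by (rule main_ne[OF assms b w])
    thus ?thesis unfolding DG_w[OF V w] .
  qed
  show ?thesis
  proof (intro conjI allI impI, goal_cases)
    case (1 \<beta> w z)
    hence "\<forall>v\<in>V. 0 < w v" by (simp add: legal_weight_def)
    thus ?case using gen 1 by blast
  next
    case (2 \<beta> z)
    have "DG V (Z_w V E ends \<beta> (\<lambda>_. 1)) z \<noteq> 0" using gen 2 by auto
    thus ?case by (simp add: ZI_eq)
  qed
qed

end
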